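(* For every $t\in\mathtt T_J$: $t$ is a $\to_{d\beta}$-normal form if and only if $t\in\mathtt m$, where $\mathtt m$ and $\mathtt m_{var}$ are the sets of terms generated by the grammar $\mathtt m_{var} ::= x \mid \mathtt m_{var}(\mathtt m, y.\mathtt m_{var})$ and $\mathtt m ::= x \mid \lambda x.\mathtt m \mid \mathtt m_{var}(\mathtt m, y.\mathtt m)$.
   Context: Terms $\mathtt T_J$: $t,u,r ::= x \mid \lambda x.t \mid t(u,y.r)$ ($y$ bound in $r$), up to $\alpha$-equivalence; $\{u/x\}t$ is capture-avoiding substitution. List contexts: $\mathtt D ::= \Diamond \mid t(u,y.\mathtt D)$, $\mathtt D\langle s\rangle$ denoting hole filling. Distant beta: $\mathtt D\langle\lambda x.t\rangle(u,y.r) \mapsto_{d\beta} \{\{u/x\}\mathtt D\langle t\rangle/y\}r$ (variables bound by $\mathtt D$ not free in $u$, $x$ not occurring in $\mathtt D$), and $\to_{d\beta}$ is its closure under all term contexts. A normal form is a term with no $\to_{d\beta}$-reduct. *)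

theory Defs
  imports Main
begin

text \<open>Terms of T_J up to alpha-equivalence, in de Bruijn representation.
  App t u r stands for t(u, y.r): the variable y is bound in r (index 0 of r).\<close>

datatype tm = Var nat | Lam tm | App tm tm tm

fun lift :: "tm \<Rightarrow> nat \<Rightarrow> tm" where
  "lift (Var i) k = (if i < k then Var i else Var (Suc i))"
| "lift (Lam t) k = Lam (lift t (Suc k))"
| "lift (App t u r) k = App (lift t k) (lift u k) (lift r (Suc k))"

fun subst :: "tm \<Rightarrow> tm \<Rightarrow> nat \<Rightarrow> tm" where
  "subst (Var i) s k = (if k < i then Var (i - 1) else if i = k then s else Var i)"
| "subst (Lam t) s k = Lam (subst t (lift s 0) (Suc k))"
| "subst (App t u r) s k = App (subst t s k) (subst u s k) (subst r (lift s 0) (Suc k))"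

datatype lctx = Hole | DApp tm tm lctx

fun fill :: "lctx \<Rightarrow> tm \<Rightarrow> tm" where
  "fill Hole s = s"
| "fill (DApp t u D) s = App t u (fill D s)"

fun depth :: "lctx \<Rightarrow> nat" where
  "depth Hole = 0"
| "depth (DApp t u D) = Suc (depth D)"

text \<open>Distant beta: D<lam x.t>(u, y.r) |-> {{u/x} D<t> / y} r.  The free variables of u
  are shifted past the depth(D) binders of D (this realises the variable conventions).\<close>
inductive dbeta_root :: "tm \<Rightarrow> tm \<Rightarrow> bool" where
  "dbeta_root (App (fill D (Lam t)) u r)
              (subst r (fill D (subst t (((\<lambda>v. lift v 0) ^^ depth D) u) 0)) 0)"

inductive dbeta :: "tm \<Rightarrow> tm \<Rightarrow> bool" where
  root: "dbeta_root t t' \<Longrightarrow> dbeta t t'"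
| lam: "dbeta t t' \<Longrightarrow> dbeta (Lam t) (Lam t')"
| app1: "dbeta t t' \<Longrightarrow> dbeta (App t u r) (App t' u r)"
| app2: "dbeta u u' \<Longrightarrow> dbeta (App t u r) (App t u' r)"
| app3: "dbeta r r' \<Longrightarrow> dbeta (App t u r) (App t u r')"

definition normal_form :: "tm \<Rightarrow> bool" where
  "normal_form t \<longleftrightarrow> \<not> (\<exists>t'. dbeta t t')"

inductive m_var :: "tm \<Rightarrow> bool" and m_nf :: "tm \<Rightarrow> bool" where
  mv_var: "m_var (Var i)"
| mv_app: "m_var t \<Longrightarrow> m_nf u \<Longrightarrow> m_var r \<Longrightarrow> m_var (App t u r)"
| m_var': "m_nf (Var i)"
| m_lam: "m_nf t \<Longrightarrow> m_nf (Lam t)"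
| m_app: "m_var t \<Longrightarrow> m_nf u \<Longrightarrow> m_nf r \<Longrightarrow> m_nf (App t u r)"

end

theory Submission
  imports Defs
begin

fun isLamD :: "tm \<Rightarrow> bool" where
  "isLamD (Var i) = False"
| "isLamD (Lam t) = True"
| "isLamD (App t u r) = isLamD r"

lemma isLamD_fill: "isLamD (fill D (Lam s))"
  by (induction D) auto

lemma isLamD_ex: "isLamD t \<Longrightarrow> \<exists>D s. t = fill D (Lam s)"
proof (induction t)
  case (Var x) then show ?case by simp
next
  case (Lam t) then show ?case by (metis fill.simps(1))
next
  case (App t1 t2 t3)
  then obtain D s where "t3 = fill D (Lam s)" by auto
  then have "App t1 t2 t3 = fill (DApp t1 t2 D) (Lam s)" by simp
  then show ?case by blast
qed

lemma mvar_not: "m_var t \<Longrightarrow> \<not> isLamD t" and "m_nf t \<Longrightarrow> True"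
  by (induction t and t rule: m_var_m_nf.inducts) auto

lemma nf_mvar: "m_nf t \<Longrightarrow> \<not> isLamD t \<Longrightarrow> m_var t"
proof (induction t)
  case (Var x) then show ?case by (simp add: mv_var)
next
  case (Lam t) then show ?case by simp
next
  case (App t1 t2 t3)
  from App.prems(1) have "m_var t1" "m_nf t2" "m_nf t3" by (auto elim: m_nf.cases)
  then show ?case using App by (auto intro: mv_app)
qed

lemma dbeta_not: "dbeta t t' \<Longrightarrow> \<not> m_nf t \<and> \<not> m_var t"
proof (induction rule: dbeta.induct)
  case (root t t')
  then show ?case
  proof cases
    case (1 D s u r)
    have "\<not> m_var (fill D (Lam s))" using mvar_not isLamD_fill by blast
    then show ?thesis using 1
      by (auto elim: m_nf.cases m_var.cases)
  qed
next
  case (lam t t') then show ?case by (auto elim: m_nf.cases m_var.cases)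
next
  case (app1 t t' u r) then show ?case by (auto elim: m_nf.cases m_var.cases)
next
  case (app2 u u' t r) then show ?case by (auto elim: m_nf.cases m_var.cases)
next
  case (app3 r r' t u) then show ?case by (auto elim: m_nf.cases m_var.cases)
qed

lemma nf_to_m: "normal_form t \<Longrightarrow> m_nf t"
proof (induction t)
  case (Var x) then show ?case by (simp add: m_var')
next
  case (Lam t)
  then have "normal_form t" unfolding normal_form_def using dbeta.lam by blast
  then show ?case using Lam by (simp add: m_lam)
next
  case (App t1 t2 t3)
  have n1: "normal_form t1" "normal_form t2" "normal_form t3"
    using App.prems unfolding normal_form_def using dbeta.app1 dbeta.app2 dbeta.app3 by blast+
  have "\<not> isLamD t1"
  proof
    assume "isLamD t1"
    then obtain D s where "t1 = fill D (Lam s)" using isLamD_ex by blast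
    then have "\<exists>t'. dbeta (App t1 t2 t3) t'" by (metis dbeta.root dbeta_root.intros)
    then show False using App.prems unfolding normal_form_def by blast
  qed
  then show ?case using App.IH n1 nf_mvar by (simp add: m_app)
qed

theorem mainTheorem2:
  fixes t :: tm
  shows "normal_form t \<longleftrightarrow> m_nf t"
  using nf_to_m dbeta_not unfolding normal_form_def by blast

end
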